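(* Let $\vec H$ be a DAG with $k$ vertices. Then $\mathrm{dtd}(\vec H)\le\lfloor k/4\rfloor+2$.
   Context: For a DAG $\vec H$, a source is a vertex of in-degree $0$. A DAG elimination forest of a DAG $\vec H$ is defined recursively: if $\vec H$ is empty, it is the empty forest; if the underlying undirected graph of $\vec H$ is disconnected, it is the union of DAG elimination forests (trees) of its connected components; if the underlying graph is connected and $\vec H$ has exactly one source $s$, it is the single-node tree $s$; otherwise (connected, at least two sources) it is a tree whose root is an arbitrarily chosen source $s$ of $\vec H$ and whose subtrees are the trees of a DAG elimination forest of the DAG obtained from $\vec H$ by deleting $s$ and all vertices reachable from $s$. The depth of a rooted forest is the maximum number of nodes on a root-to-leaf path. $\mathrm{dtd}(\vec H)$ is the minimum depth of a DAG elimination forest of $\vec H$. *)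

theory Defs
  imports Main
begin

definition is_dag :: "'a set \<Rightarrow> 'a rel \<Rightarrow> bool" where
  "is_dag V E \<longleftrightarrow> finite V \<and> E \<subseteq> V \<times> V \<and> acyclic E"

definition induced :: "'a rel \<Rightarrow> 'a set \<Rightarrow> 'a rel" where
  "induced E W = E \<inter> (W \<times> W)"

definition und :: "'a rel \<Rightarrow> 'a set \<Rightarrow> 'a rel" where
  "und E W = induced E W \<union> (induced E W)\<inverse>"

definition und_connected :: "'a rel \<Rightarrow> 'a set \<Rightarrow> bool" where
  "und_connected E W \<longleftrightarrow> W \<noteq> {} \<and> (\<forall>x\<in>W. \<forall>y\<in>W. (x, y) \<in> (und E W)\<^sup>*)"

definition components :: "'a rel \<Rightarrow> 'a set \<Rightarrow> 'a set set" where
  "components E W = {{y \<in> W. (x, y) \<in> (und E W)\<^sup>*} | x. x \<in> W}"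

definition sources :: "'a rel \<Rightarrow> 'a set \<Rightarrow> 'a set" where
  "sources E W = {s \<in> W. \<not> (\<exists>u\<in>W. (u, s) \<in> E)}"

definition reach :: "'a rel \<Rightarrow> 'a set \<Rightarrow> 'a \<Rightarrow> 'a set" where
  "reach E W s = {v. (s, v) \<in> (induced E W)\<^sup>*}"

datatype 'a rtree = Node 'a "'a rtree list"

text \<open>Depth = maximum number of nodes on a root-to-leaf path.\<close>
fun tdepth :: "'a rtree \<Rightarrow> nat" where
  "tdepth (Node a ts) = Suc (fold max (map tdepth ts) 0)"

definition fdepth :: "'a rtree list \<Rightarrow> nat" where
  "fdepth ts = fold max (map tdepth ts) 0"

inductive elim_forest :: "'a rel \<Rightarrow> 'a set \<Rightarrow> 'a rtree list \<Rightarrow> bool"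
  and elim_tree :: "'a rel \<Rightarrow> 'a set \<Rightarrow> 'a rtree \<Rightarrow> bool"
  for E :: "'a rel" where
  empty: "elim_forest E {} []"
| disconnected: "\<lbrakk> W \<noteq> {}; \<not> und_connected E W; distinct cs; set cs = components E W;
                  list_all2 (elim_tree E) cs ts \<rbrakk> \<Longrightarrow> elim_forest E W ts"
| connected: "\<lbrakk> und_connected E W; elim_tree E W t \<rbrakk> \<Longrightarrow> elim_forest E W [t]"
| one_source: "\<lbrakk> und_connected E W; sources E W = {s} \<rbrakk> \<Longrightarrow> elim_tree E W (Node s [])"
| many_sources: "\<lbrakk> und_connected E W; s \<in> sources E W; sources E W \<noteq> {s};
                  elim_forest E (W - reach E W s) ts \<rbrakk> \<Longrightarrow> elim_tree E W (Node s ts)"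

definition dtd :: "'a set \<Rightarrow> 'a rel \<Rightarrow> nat" where
  "dtd V E = (LEAST d. \<exists>F. elim_forest E V F \<and> fdepth F = d)"

end

theory Submission imports Defs begin

lemma fold_max_le: "fold max xs a \<le> (D::nat) \<longleftrightarrow> a \<le> D \<and> (\<forall>x\<in>set xs. x \<le> D)"
  by (induction xs arbitrary: a) auto

lemma tdepth_Node: "tdepth (Node a ts) = Suc (fdepth ts)"
  by (simp add: fdepth_def)

lemma fdepth_le: "(\<forall>t\<in>set ts. tdepth t \<le> D) \<Longrightarrow> fdepth ts \<le> D"
  by (simp add: fdepth_def fold_max_le)

lemma ex_list_all2: "\<forall>c\<in>set cs. \<exists>t. P c t \<Longrightarrow> \<exists>ts. list_all2 P cs ts"
proof (induction cs)
  case Nil then show ?case by auto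
next
  case (Cons c cs)
  then obtain t ts where "P c t" "list_all2 P cs ts" by auto
  then show ?case by (intro exI[of _ "t # ts"]) auto
qed

lemma graph_count:
  fixes T :: "'a set" and P :: "'a rel"
  assumes fin: "finite P" and conn: "\<forall>x\<in>T. \<forall>y\<in>T. (x, y) \<in> (P \<union> P\<inverse>)\<^sup>*"
  shows "card T \<le> card P + 1"
proof (cases "T = {} \<or> infinite T")
  case True then show ?thesis by auto
next
  case False
  then obtain r where r: "r \<in> T" and finT: "finite T" by auto
  define U where "U = P \<union> P\<inverse>"
  define d where "d t = (LEAST m. (t, r) \<in> U ^^ m)" for t
  have ex: "\<exists>m. (t, r) \<in> U ^^ m" if "t \<in> T" for t
    using conn r that by (simp add: U_def rtrancl_power)
  have dr: "(t, r) \<in> U ^^ d t" if "t \<in> T" for t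
    unfolding d_def using ex[OF that] by (rule LeastI_ex)
  have dle: "d t \<le> m" if "(t, r) \<in> U ^^ m" for t m
    unfolding d_def using that by (rule Least_le)
  have nx: "\<exists>y. (t, y) \<in> U \<and> d y + 1 = d t" if "t \<in> T" "t \<noteq> r" for t
  proof -
    have "d t \<noteq> 0" using dr[OF that(1)] that(2) by (metis relpow.simps(1) pair_in_Id_conv)
    then obtain m where m: "d t = Suc m" by (cases "d t") auto
    with dr[OF that(1)] obtain y where y: "(t, y) \<in> U" "(y, r) \<in> U ^^ m"
      by (metis relpow_Suc_D2)
    have "d y \<le> m" using y(2) dle by blast
    moreover have "(t, r) \<in> U ^^ Suc (d y)"
    proof -
      have "(y, r) \<in> U ^^ d y" using y(2) unfolding d_def by (rule LeastI)
      then show ?thesis using y(1) by (meson relpow_Suc_I2)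
    qed
    then have "d t \<le> Suc (d y)" using dle by blast
    ultimately show ?thesis using y m by (intro exI[of _ y]) auto
  qed
  define nxt where "nxt t = (SOME y. (t, y) \<in> U \<and> d y + 1 = d t)" for t
  have nxt: "(t, nxt t) \<in> U \<and> d (nxt t) + 1 = d t" if "t \<in> T - {r}" for t
  proof -
    have "\<exists>y. (t, y) \<in> U \<and> d y + 1 = d t" using nx that by auto
    then show ?thesis unfolding nxt_def by (rule someI_ex)
  qed
  define phi where "phi t = (if (t, nxt t) \<in> P then (t, nxt t) else (nxt t, t))" for t
  have img: "phi ` (T - {r}) \<subseteq> P"
  proof
    fix x assume "x \<in> phi ` (T - {r})"
    then obtain t where t: "t \<in> T - {r}" "x = phi t" by auto
    then have "(t, nxt t) \<in> P \<or> (nxt t, t) \<in> P" using nxt[OF t(1)] unfolding U_def by auto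
    then show "x \<in> P" using t(2) unfolding phi_def by auto
  qed
  have inj: "inj_on phi (T - {r})"
  proof (rule inj_onI)
    fix a b assume a: "a \<in> T - {r}" and b: "b \<in> T - {r}" and eq: "phi a = phi b"
    have na: "d (nxt a) + 1 = d a" and nb: "d (nxt b) + 1 = d b" using nxt a b by auto
    show "a = b"
    proof (cases "(a, nxt a) \<in> P"; cases "(b, nxt b) \<in> P")
      assume "(a, nxt a) \<in> P" "(b, nxt b) \<in> P" then show ?thesis using eq by (simp add: phi_def)
    next
      assume h1: "(a, nxt a) \<in> P" and h2: "(b, nxt b) \<notin> P"
      have "phi a = (a, nxt a)" using h1 by (simp add: phi_def)
      moreover have "phi b = (nxt b, b)" using h2 by (simp add: phi_def)
      ultimately have "a = nxt b" "nxt a = b" using eq by auto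
      then have "d b + 1 = d a" "d a + 1 = d b" using na nb by simp_all
      then show ?thesis by linarith
    next
      assume h1: "(a, nxt a) \<notin> P" and h2: "(b, nxt b) \<in> P"
      have "phi a = (nxt a, a)" using h1 by (simp add: phi_def)
      moreover have "phi b = (b, nxt b)" using h2 by (simp add: phi_def)
      ultimately have "a = nxt b" "nxt a = b" using eq by auto
      then have "d b + 1 = d a" "d a + 1 = d b" using na nb by simp_all
      then show ?thesis by linarith
    next
      assume "(a, nxt a) \<notin> P" "(b, nxt b) \<notin> P" then show ?thesis using eq by (simp add: phi_def)
    qed
  qed
  have "card (T - {r}) \<le> card P"
    using card_inj_on_le[OF inj img fin] .
  then show ?thesis using r finT by (simp add: card_Diff_singleton)
qed

lemma und_sym: "(und E W)\<inverse> = und E W"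
  by (auto simp: und_def)

lemma und_rtrancl_sym: "(a, b) \<in> (und E W)\<^sup>* \<Longrightarrow> (b, a) \<in> (und E W)\<^sup>*"
  by (metis rtrancl_converseI und_sym)

lemma und_sub: "und E W \<subseteq> W \<times> W"
  by (auto simp: und_def induced_def)

lemma comp_path:
  assumes "(y, z) \<in> (und E W)\<^sup>*" "y \<in> C" "C = {v \<in> W. (x, v) \<in> (und E W)\<^sup>*}"
  shows "(y, z) \<in> (und E C)\<^sup>* \<and> z \<in> C"
  using assms(1)
proof (induction rule: rtrancl_induct)
  case base then show ?case using assms(2) by auto
next
  case (step z w)
  have zw: "z \<in> W" "w \<in> W" using step(2) und_sub by blast+
  have "(x, w) \<in> (und E W)\<^sup>*" using step assms(3) by (auto intro: rtrancl.rtrancl_into_rtrancl)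
  then have wC: "w \<in> C" using zw assms(3) by auto
  have "(z, w) \<in> und E C" using step(2) step(3) wC by (auto simp: und_def induced_def)
  then show ?case using step(3) wC by auto
qed

lemma components_props:
  assumes "C \<in> components E W"
  shows "C \<subseteq> W" "und_connected E C"
proof -
  obtain x where x: "x \<in> W" "C = {v \<in> W. (x, v) \<in> (und E W)\<^sup>*}"
    using assms unfolding components_def by blast
  show "C \<subseteq> W" unfolding x(2) by blast
  have xC: "x \<in> C" using x(1) unfolding x(2) by simp
  have yz: "(y, z) \<in> (und E C)\<^sup>*" if "y \<in> C" "z \<in> C" for y z
  proof -
    have "(x, y) \<in> (und E W)\<^sup>*" using that(1) unfolding x(2) by simp
    then have "(y, x) \<in> (und E W)\<^sup>*" by (rule und_rtrancl_sym)
    moreover have "(x, z) \<in> (und E W)\<^sup>*" using that(2) unfolding x(2) by simp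
    ultimately have "(y, z) \<in> (und E W)\<^sup>*" by (rule rtrancl_trans)
    from comp_path[OF this that(1) x(2)] show ?thesis by (rule conjunct1)
  qed
  show "und_connected E C" unfolding und_connected_def using xC yz by blast
qed

lemma components_finite: "finite W \<Longrightarrow> finite (components E W)"
proof -
  assume "finite W"
  have "components E W = (\<lambda>x. {v \<in> W. (x, v) \<in> (und E W)\<^sup>*}) ` W"
    unfolding components_def by blast
  then show ?thesis using \<open>finite W\<close> by simp
qed

lemma connected_component: "und_connected E W \<Longrightarrow> W \<in> components E W"
proof -
  assume c: "und_connected E W"
  then obtain x where x: "x \<in> W" unfolding und_connected_def by blast
  have "{v \<in> W. (x, v) \<in> (und E W)\<^sup>*} = W" using c x unfolding und_connected_def by blast
  then show ?thesis using x unfolding components_def by blast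
qed

lemma forest_exists:
  assumes fin: "finite W"
    and comps: "\<forall>C\<in>components E W. \<exists>t. elim_tree E C t \<and> tdepth t \<le> D"
  shows "\<exists>F. elim_forest E W F \<and> fdepth F \<le> D"
proof (cases "W = {}")
  case True
  have "elim_forest E W []" unfolding True by (rule elim_forest_elim_tree.empty)
  moreover have "fdepth [] \<le> D" by (simp add: fdepth_def)
  ultimately show ?thesis by blast
next
  case ne: False
  show ?thesis
  proof (cases "und_connected E W")
    case True
    then obtain t where t: "elim_tree E W t" "tdepth t \<le> D" using comps connected_component by blast
    have "elim_forest E W [t]" using True t(1) by (rule elim_forest_elim_tree.connected)
    moreover have "fdepth [t] \<le> D" using t(2) by (simp add: fdepth_def)
    ultimately show ?thesis by blast
  next
    case False
    obtain cs where cs: "set cs = components E W" "distinct cs"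
      using finite_distinct_list[OF components_finite[OF fin]] by blast
    have "\<forall>c\<in>set cs. \<exists>t. (elim_tree E c t \<and> tdepth t \<le> D)" using cs comps by simp
    from ex_list_all2[OF this] obtain ts where ts: "list_all2 (\<lambda>c t. elim_tree E c t \<and> tdepth t \<le> D) cs ts"
      by blast
    have "list_all2 (elim_tree E) cs ts" using ts by (rule list_all2_mono) simp
    then have "elim_forest E W ts"
      using ne False cs by (intro elim_forest_elim_tree.disconnected) simp_all
    moreover have "\<forall>t\<in>set ts. tdepth t \<le> D"
      using ts by (metis (no_types, lifting) in_set_conv_nth list_all2_conv_all_nth)
    ultimately show ?thesis using fdepth_le by blast
  qed
qed

lemma tree_step:
  assumes "und_connected E W" "s \<in> sources E W" "sources E W \<noteq> {s}" "finite W"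
    and "\<forall>C\<in>components E (W - reach E W s). \<exists>t. elim_tree E C t \<and> tdepth t \<le> D"
  shows "\<exists>t. elim_tree E W t \<and> tdepth t \<le> Suc D"
proof -
  obtain F where F: "elim_forest E (W - reach E W s) F" "fdepth F \<le> D"
    using forest_exists[of "W - reach E W s" E D] assms by auto
  have "elim_tree E W (Node s F)" using assms F by (intro elim_forest_elim_tree.many_sources) auto
  then show ?thesis using F by (intro exI[of _ "Node s F"]) (simp add: fdepth_def)
qed

lemma tree_one:
  assumes "und_connected E W" "sources E W = {s}"
  shows "\<exists>t. elim_tree E W t \<and> tdepth t \<le> 1"
  using elim_forest_elim_tree.one_source[OF assms]
  by (intro exI[of _ "Node s []"]) (simp add: tdepth_Node fdepth_def)

lemma reach_self: "s \<in> reach E W s"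
  by (simp add: reach_def)

lemma reach_sub: "s \<in> W \<Longrightarrow> reach E W s \<subseteq> W"
proof
  fix v assume s: "s \<in> W" and "v \<in> reach E W s"
  then have "(s, v) \<in> (induced E W)\<^sup>*" by (simp add: reach_def)
  then show "v \<in> W" using s by (induction rule: rtrancl_induct) (auto simp: induced_def)
qed

lemma reach_closed: "v \<in> reach E W s \<Longrightarrow> (v, w) \<in> E \<Longrightarrow> v \<in> W \<Longrightarrow> w \<in> W \<Longrightarrow> w \<in> reach E W s"
  unfolding reach_def induced_def
  by (auto intro: rtrancl.rtrancl_into_rtrancl)

lemma reach_ns: "v \<in> reach E W s \<Longrightarrow> v \<noteq> s \<Longrightarrow> \<exists>u\<in>W. (u, v) \<in> E \<and> v \<in> W"
proof -
  assume "v \<in> reach E W s" "v \<noteq> s"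
  then have "(s, v) \<in> (induced E W)\<^sup>*" by (simp add: reach_def)
  then show ?thesis using \<open>v \<noteq> s\<close>
    unfolding induced_def by (cases rule: rtranclE) blast+
qed

lemma reach_ns2: "v \<in> reach E W s \<Longrightarrow> v \<noteq> s \<Longrightarrow> v \<in> W - sources E W"
  using reach_ns[of v E W s] unfolding sources_def by blast


context
  fixes V :: "'a set" and E :: "'a rel"
  assumes dag: "is_dag V E"
begin

lemma finV: "finite V"
  using dag by (simp add: is_dag_def)

lemma finE: "finite E"
proof -
  have "E \<subseteq> V \<times> V" using dag by (simp add: is_dag_def)
  then show ?thesis using finV by (meson finite_SigmaI finite_subset)
qed

lemma wfE: "wf E"
  using finE dag by (simp add: is_dag_def finite_acyclic_wf)

lemma irr: "(x, x) \<notin> E"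
proof
  assume "(x, x) \<in> E"
  then have "(x, x) \<in> E\<^sup>+" by blast
  then show False using dag by (simp add: is_dag_def acyclic_def)
qed

lemma source_reach:
  assumes "v \<in> W"
  shows "\<exists>s\<in>sources E W. v \<in> reach E W s"
proof -
  define Q where "Q = {u \<in> W. (u, v) \<in> (induced E W)\<^sup>*}"
  have "v \<in> Q" using assms by (simp add: Q_def)
  then obtain z where z: "z \<in> Q" and min: "\<And>y. (y, z) \<in> E \<Longrightarrow> y \<notin> Q"
    using wfE_min[OF wfE] by metis
  have zW: "z \<in> W" and zv: "(z, v) \<in> (induced E W)\<^sup>*" using z by (auto simp: Q_def)
  have "z \<in> sources E W"
  proof -
    have "\<not> (\<exists>u\<in>W. (u, z) \<in> E)"
    proof
      assume "\<exists>u\<in>W. (u, z) \<in> E"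
      then obtain u where u: "u \<in> W" "(u, z) \<in> E" by blast
      then have "(u, z) \<in> induced E W" using zW by (simp add: induced_def)
      then have "(u, v) \<in> (induced E W)\<^sup>*" using zv by (rule converse_rtrancl_into_rtrancl)
      then have "u \<in> Q" using u by (simp add: Q_def)
      then show False using min u(2) by blast
    qed
    then show ?thesis using zW by (simp add: sources_def)
  qed
  moreover have "v \<in> reach E W z" using zv by (simp add: reach_def)
  ultimately show ?thesis by blast
qed

lemma sources_ne: "x \<in> W \<Longrightarrow> sources E W \<noteq> {}"
  using source_reach by blast

lemma out_nb:
  assumes c: "und_connected E W" and s: "s \<in> sources E W" and x: "x \<in> W" "x \<noteq> s"
  shows "\<exists>a\<in>W. (s, a) \<in> E"
proof -
  have sW: "s \<in> W" using s by (simp add: sources_def)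
  have "(s, x) \<in> (und E W)\<^sup>*" using c sW x(1) by (simp add: und_connected_def)
  then obtain y where y: "(s, y) \<in> und E W" using x(2) by (cases rule: converse_rtranclE) auto
  show ?thesis
  proof (cases "(s, y) \<in> induced E W")
    case True then show ?thesis by (auto simp: induced_def)
  next
    case False
    then have "(y, s) \<in> induced E W" using y by (simp add: und_def)
    then show ?thesis using s by (auto simp: induced_def sources_def)
  qed
qed

lemma out_nb2:
  assumes c: "und_connected E W" and s: "s \<in> sources E W" and ne: "sources E W \<noteq> {s}"
  shows "\<exists>a\<in>W. (s, a) \<in> E"
proof -
  obtain x where "x \<in> sources E W" "x \<noteq> s" using s ne by blast
  then show ?thesis using out_nb[OF c s, of x] by (simp add: sources_def)
qed

lemma comp_card:
  assumes W: "W \<subseteq> V" and s: "s \<in> W" and C: "C \<in> components E (W - reach E W s)"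
  shows "card C + card (reach E W s) \<le> card W"
    and "card (C - sources E C) + card (reach E W s - {s}) \<le> card (W - sources E W)"
    and "C \<subseteq> V" "und_connected E C" "card C < card W"
proof -
  have finW: "finite W" using W finV finite_subset by blast
  have CW: "C \<subseteq> W - reach E W s" using components_props(1)[OF C] .
  have RW: "reach E W s \<subseteq> W" using reach_sub[OF s] .
  have "card (C \<union> reach E W s) \<le> card W"
    using CW RW finW by (intro card_mono) auto
  moreover have "card (C \<union> reach E W s) = card C + card (reach E W s)"
    using CW RW finW by (intro card_Un_disjoint) (auto intro: finite_subset)
  ultimately show "card C + card (reach E W s) \<le> card W" by simp
  have "C - sources E C \<subseteq> W - sources E W"
  proof
    fix v assume v: "v \<in> C - sources E C"
    then obtain u where "u \<in> C" "(u, v) \<in> E" unfolding sources_def by blast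
    moreover have "C \<subseteq> W" using CW by blast
    ultimately show "v \<in> W - sources E W" using v unfolding sources_def by blast
  qed
  moreover have "reach E W s - {s} \<subseteq> W - sources E W"
  proof
    fix v assume "v \<in> reach E W s - {s}"
    then show "v \<in> W - sources E W" by (intro reach_ns2) auto
  qed
  moreover have "(C - sources E C) \<inter> (reach E W s - {s}) = {}" using CW by blast
  ultimately have "card ((C - sources E C) \<union> (reach E W s - {s})) \<le> card (W - sources E W)"
    "card ((C - sources E C) \<union> (reach E W s - {s})) = card (C - sources E C) + card (reach E W s - {s})"
    using finW RW CW by (auto intro!: card_mono card_Un_disjoint intro: finite_subset)
  then show "card (C - sources E C) + card (reach E W s - {s}) \<le> card (W - sources E W)" by simp
  show "C \<subseteq> V" using CW W by blast
  show "und_connected E C" using components_props(2)[OF C] .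
  have "card C + 1 \<le> card W"
    using \<open>card C + card (reach E W s) \<le> card W\<close> reach_self[of s E W] RW finW
    by (metis add_le_mono le_trans nat_add_left_cancel_le card_gt_0_iff empty_iff finite_subset less_one not_le)
  then show "card C < card W" by simp
qed


lemma singleton_tree:
  "\<exists>t. elim_tree E {x} t \<and> tdepth t \<le> 1"
proof -
  have "und_connected E {x}" by (simp add: und_connected_def)
  moreover have "sources E {x} = {x}" using irr[of x] by (auto simp: sources_def)
  ultimately show ?thesis by (rule tree_one)
qed

lemma reach2_noedge:
  assumes W: "W \<subseteq> V" and c: "und_connected E W"
    and r2: "\<forall>s\<in>sources E W. card (reach E W s) \<le> 2"
    and s: "s \<in> sources E W" and a: "a \<in> W" "(s, a) \<in> E"
    and u: "u \<in> W - reach E W s" and v: "v \<in> W - reach E W s" and uv: "(u, v) \<in> E"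
  shows False
proof -
  have finW: "finite W" using W finV finite_subset by blast
  have fin_reach: "finite (reach E W x)" if "x \<in> W" for x
    using reach_sub[OF that] finW finite_subset by blast
  have F1: "x \<in> sources E W" if xy: "x \<in> W" "y \<in> W" "(x, y) \<in> E" for x y
  proof (rule ccontr)
    assume ns: "x \<notin> sources E W"
    obtain s1 where s1: "s1 \<in> sources E W" "x \<in> reach E W s1" using source_reach[OF xy(1)] by blast
    have s1W: "s1 \<in> W" using s1 by (simp add: sources_def)
    have "x \<noteq> s1" using ns s1 by blast
    have "y \<in> reach E W s1" using reach_closed[OF s1(2) xy(3) xy(1) xy(2)] .
    have "y \<noteq> s1" using s1(1) xy by (auto simp: sources_def)
    have "x \<noteq> y" using irr xy(3) by blast
    have "{s1, x, y} \<subseteq> reach E W s1" using reach_self[of s1 E W] \<open>x \<in> reach E W s1\<close> \<open>y \<in> reach E W s1\<close> by blast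
    then have "card {s1, x, y} \<le> card (reach E W s1)" using fin_reach[OF s1W] by (rule card_mono[rotated])
    moreover have "card {s1, x, y} = 3" using \<open>x \<noteq> s1\<close> \<open>y \<noteq> s1\<close> \<open>x \<noteq> y\<close> by auto
    ultimately show False using r2 s1(1) by fastforce
  qed
  have F2: "reach E W x = {x, y}" if "x \<in> sources E W" "y \<in> W" "(x, y) \<in> E" for x y
  proof -
    have xW: "x \<in> W" using that by (simp add: sources_def)
    have "y \<in> reach E W x" using reach_closed[OF reach_self that(3) xW that(2)] .
    then have sub: "{x, y} \<subseteq> reach E W x" using reach_self[of x E W] by blast
    have "x \<noteq> y" using irr that(3) by blast
    then have "card {x, y} = 2" by simp
    then have "card (reach E W x) \<le> card {x, y}" using r2 that(1) by simp
    then show ?thesis using card_seteq[OF fin_reach[OF xW] sub] by simp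
  qed
  have sW: "s \<in> W" using s by (simp add: sources_def)
  define X where "X = insert a {y \<in> W. (y, a) \<in> E}"
  have closed: "w \<in> X" if "(a, w) \<in> (und E W)\<^sup>*" for w
    using that
  proof (induction rule: rtrancl_induct)
    case base then show ?case by (simp add: X_def)
  next
    case (step w w')
    have ww': "w \<in> W" "w' \<in> W" using step(2) und_sub by blast+
    show ?case
    proof (cases "w = a")
      case True
      show ?thesis
      proof (cases "(w, w') \<in> E")
        case True
        then have "a \<in> sources E W" using F1 ww' \<open>w = a\<close> by blast
        then show ?thesis using a sW by (auto simp: sources_def)
      next
        case False
        then have "(w', w) \<in> E" using step(2) by (auto simp: und_def induced_def)
        then show ?thesis using ww' True by (simp add: X_def)
      qed
    next
      case False
      then have wa: "(w, a) \<in> E" using step(3) by (simp add: X_def)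
      have ws: "w \<in> sources E W" using F1[OF ww'(1) a(1) wa] .
      have Rw: "reach E W w = {w, a}" using F2[OF ws a(1) wa] .
      show ?thesis
      proof (cases "(w, w') \<in> E")
        case True
        have "w' \<in> reach E W w" using reach_closed[OF reach_self True ww'] .
        moreover have "w' \<noteq> w" using irr True by blast
        ultimately show ?thesis using Rw by (simp add: X_def)
      next
        case False
        then have "(w', w) \<in> E" using step(2) by (auto simp: und_def induced_def)
        then show ?thesis using ws ww' by (auto simp: sources_def)
      qed
    qed
  qed
  have uW: "u \<in> W" using u by blast
  have "(a, u) \<in> (und E W)\<^sup>*" using c a(1) uW by (simp add: und_connected_def)
  then have "u \<in> X" by (rule closed)
  moreover have aR: "a \<in> reach E W s" using reach_closed[OF reach_self a(2) sW a(1)] .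
  ultimately have ua: "(u, a) \<in> E" using u by (auto simp: X_def)
  have us: "u \<in> sources E W" using F1[OF uW a(1) ua] .
  have Ru: "reach E W u = {u, a}" using F2[OF us a(1) ua] .
  have "v \<in> reach E W u" using reach_closed[OF reach_self uv uW] v by blast
  moreover have "v \<noteq> u" using irr uv by blast
  ultimately have "v = a" using Ru by simp
  then show False using v aR by blast
qed

lemma lemA:
  "W \<subseteq> V \<Longrightarrow> und_connected E W \<Longrightarrow>
    \<exists>t. elim_tree E W t \<and> 2 * tdepth t \<le> card (W - sources E W) + 3"
proof (induction "card W" arbitrary: W rule: less_induct)
  case less
  have finW: "finite W" using less.prems finV finite_subset by blast
  obtain x where x: "x \<in> W" using less.prems(2) by (auto simp: und_connected_def)
  obtain s0 where s0: "s0 \<in> sources E W" using sources_ne[OF x] by blast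
  show ?case
  proof (cases "\<exists>s. sources E W = {s}")
    case True
    then obtain s where "sources E W = {s}" by blast
    from tree_one[OF less.prems(2) this] obtain t where "elim_tree E W t" "tdepth t \<le> 1" by blast
    then show ?thesis by (intro exI[of _ t]) simp
  next
    case many: False
    show ?thesis
    proof (cases "\<exists>s\<in>sources E W. 3 \<le> card (reach E W s)")
      case True
      then obtain s where s: "s \<in> sources E W" "3 \<le> card (reach E W s)" by blast
      have sW: "s \<in> W" using s by (simp add: sources_def)
      have finR: "finite (reach E W s)" using reach_sub[OF sW] finW finite_subset by blast
      have R2: "2 \<le> card (reach E W s - {s})" using s(2) finR reach_self[of s E W] by simp
      define D where "D = (card (W - sources E W) + 1) div 2"
      have "\<forall>C\<in>components E (W - reach E W s). \<exists>t. elim_tree E C t \<and> tdepth t \<le> D"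
      proof
        fix C assume C: "C \<in> components E (W - reach E W s)"
        note cc = comp_card[OF less.prems(1) sW C]
        from less.hyps[OF cc(5) cc(3) cc(4)] obtain t where
          t: "elim_tree E C t" "2 * tdepth t \<le> card (C - sources E C) + 3" by blast
        have "tdepth t \<le> D" using t(2) cc(2) R2 unfolding D_def by linarith
        then show "\<exists>t. elim_tree E C t \<and> tdepth t \<le> D" using t(1) by blast
      qed
      from tree_step[OF less.prems(2) s(1) _ finW this] many
      obtain t where "elim_tree E W t" "tdepth t \<le> Suc D" by blast
      then show ?thesis unfolding D_def by (intro exI[of _ t]) linarith
    next
      case False
      then have r2: "\<forall>s\<in>sources E W. card (reach E W s) \<le> 2" by auto
      have ne: "sources E W \<noteq> {s0}" using many by blast
      obtain a where a: "a \<in> W" "(s0, a) \<in> E" using out_nb2[OF less.prems(2) s0 ne] by blast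
      have s0W: "s0 \<in> W" using s0 by (simp add: sources_def)
      have aR: "a \<in> reach E W s0" using reach_closed[OF reach_self a(2) s0W a(1)] .
      have "a \<noteq> s0" using irr a(2) by blast
      then have ans: "a \<in> W - sources E W" using reach_ns2[OF aR] by blast
      then have pos: "1 \<le> card (W - sources E W)" using finW
        by (metis One_nat_def Suc_leI card_gt_0_iff empty_iff finite_Diff)
      have noedge: "induced E (W - reach E W s0) = {}"
      proof -
        have False if "u \<in> W - reach E W s0" "v \<in> W - reach E W s0" "(u, v) \<in> E" for u v
          using reach2_noedge[OF less.prems(1) less.prems(2) r2 s0 a that] .
        then show ?thesis by (auto simp: induced_def)
      qed
      have "\<forall>C\<in>components E (W - reach E W s0). \<exists>t. elim_tree E C t \<and> tdepth t \<le> 1"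
      proof
        fix C assume "C \<in> components E (W - reach E W s0)"
        then obtain y where y: "C = {v \<in> W - reach E W s0. (y, v) \<in> (und E (W - reach E W s0))\<^sup>*}"
          "y \<in> W - reach E W s0"
          unfolding components_def by blast
        have "und E (W - reach E W s0) = {}" using noedge by (simp add: und_def)
        then have "C = {y}" using y by auto
        then show "\<exists>t. elim_tree E C t \<and> tdepth t \<le> 1" using singleton_tree by simp
      qed
      from tree_step[OF less.prems(2) s0 ne finW this]
      obtain t where "elim_tree E W t" "tdepth t \<le> 2" by auto
      then show ?thesis using pos by (intro exI[of _ t]) linarith
    qed
  qed
qed


lemma card_le2_pair:
  assumes "finite A" "A \<noteq> {}" "card A \<le> 2"
  shows "\<exists>p. fst p \<in> A \<and> snd p \<in> A \<and> A \<subseteq> {fst p, snd p}"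
proof -
  obtain a where a: "a \<in> A" using assms(2) by blast
  show ?thesis
  proof (cases "A - {a} = {}")
    case True
    then show ?thesis using a by (intro exI[of _ "(a, a)"]) auto
  next
    case False
    then obtain b where b: "b \<in> A" "b \<noteq> a" by blast
    have "A \<subseteq> {a, b}"
    proof
      fix c assume c: "c \<in> A"
      show "c \<in> {a, b}"
      proof (rule ccontr)
        assume "c \<notin> {a, b}"
        then have "{a, b, c} \<subseteq> A" "card {a, b, c} = 3" using a b c by auto
        then have "3 \<le> card A" using assms(1) by (metis card_mono)
        then show False using assms(3) by simp
      qed
    qed
    then show ?thesis using a b by (intro exI[of _ "(a, b)"]) auto
  qed
qed

lemma counting:
  assumes W: "W \<subseteq> V" and c: "und_connected E W"
    and many: "\<forall>s. sources E W \<noteq> {s}"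
    and r3: "\<forall>s\<in>sources E W. card (reach E W s) \<le> 3"
  shows "card (W - sources E W) \<le> card (sources E W) + 1"
proof -
  define S where "S = sources E W"
  have finW: "finite W" using W finV finite_subset by blast
  have SW: "S \<subseteq> W" by (auto simp: S_def sources_def)
  have "\<forall>s\<in>S. \<exists>p. fst p \<in> reach E W s - {s} \<and> snd p \<in> reach E W s - {s} \<and>
           reach E W s - {s} \<subseteq> {fst p, snd p}"
  proof
    fix s assume s: "s \<in> S"
    have sW: "s \<in> W" using s SW by blast
    have ne: "sources E W \<noteq> {s}" using many by blast
    obtain a where a: "a \<in> W" "(s, a) \<in> E" using out_nb2[OF c s[unfolded S_def] ne] by blast
    have "a \<in> reach E W s" using reach_closed[OF reach_self a(2) sW a(1)] .
    moreover have "a \<noteq> s" using irr a(2) by blast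
    ultimately have ne2: "reach E W s - {s} \<noteq> {}" by blast
    have finR: "finite (reach E W s)" using reach_sub[OF sW] finW finite_subset by blast
    have "card (reach E W s) \<le> 3" using r3 s unfolding S_def by blast
    then have "card (reach E W s - {s}) \<le> 2" using finR reach_self[of s E W] by simp
    then show "\<exists>p. fst p \<in> reach E W s - {s} \<and> snd p \<in> reach E W s - {s} \<and>
           reach E W s - {s} \<subseteq> {fst p, snd p}"
      using card_le2_pair[OF _ ne2] finR by blast
  qed
  then obtain p where p: "\<And>s. s \<in> S \<Longrightarrow> fst (p s) \<in> reach E W s - {s} \<and> snd (p s) \<in> reach E W s - {s} \<and>
           reach E W s - {s} \<subseteq> {fst (p s), snd (p s)}"
    by metis
  define P where "P = p ` S"
  define U where "U = P \<union> P\<inverse>"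
  have finS: "finite S" using SW finW finite_subset by blast
  have finP: "finite P" using finS by (simp add: P_def)
  have cardP: "card P \<le> card S" unfolding P_def using finS by (rule card_image_le)
  have pair: "(x, y) \<in> U\<^sup>*" if s: "s \<in> S" and xy: "x \<in> reach E W s - {s}" "y \<in> reach E W s - {s}" for s x y
  proof -
    have pP: "(fst (p s), snd (p s)) \<in> P" using s by (simp add: P_def)
    have "x \<in> {fst (p s), snd (p s)}" "y \<in> {fst (p s), snd (p s)}" using p[OF s] xy by blast+
    then show ?thesis using pP unfolding U_def by auto
  qed
  define h where "h w = (if w \<in> S then fst (p w) else w)" for w
  have edge: "(h u, h v) \<in> U\<^sup>* \<and> (h v, h u) \<in> U\<^sup>*" if uv: "u \<in> W" "v \<in> W" "(u, v) \<in> E" for u v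
  proof -
    have vS: "v \<notin> S" using uv by (auto simp: S_def sources_def)
    have hv: "h v = v" using vS by (simp add: h_def)
    show ?thesis
    proof (cases "u \<in> S")
      case True
      have hu: "h u = fst (p u)" using True by (simp add: h_def)
      have "v \<in> reach E W u" using reach_closed[OF reach_self uv(3) uv(1) uv(2)] .
      moreover have "v \<noteq> u" using irr uv(3) by blast
      ultimately have "v \<in> reach E W u - {u}" by blast
      moreover have "fst (p u) \<in> reach E W u - {u}" using p[OF True] by blast
      ultimately have "(fst (p u), v) \<in> U\<^sup>*" "(v, fst (p u)) \<in> U\<^sup>*"
        using pair[OF True] by blast+
      then show ?thesis using hu hv by simp
    next
      case False
      have hu: "h u = u" using False by (simp add: h_def)
      obtain s1 where s1: "s1 \<in> sources E W" "u \<in> reach E W s1" using source_reach[OF uv(1)] by blast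
      have "s1 \<in> S" using s1 by (simp add: S_def)
      have "u \<noteq> s1" using False \<open>s1 \<in> S\<close> by blast
      have "v \<in> reach E W s1" using reach_closed[OF s1(2) uv(3) uv(1) uv(2)] .
      moreover have "v \<noteq> s1" using vS \<open>s1 \<in> S\<close> by blast
      ultimately have vR: "v \<in> reach E W s1 - {s1}" by blast
      have uR: "u \<in> reach E W s1 - {s1}" using s1(2) \<open>u \<noteq> s1\<close> by blast
      have "(u, v) \<in> U\<^sup>*" "(v, u) \<in> U\<^sup>*"
        using pair[OF \<open>s1 \<in> S\<close> uR vR] pair[OF \<open>s1 \<in> S\<close> vR uR] by blast+
      then show ?thesis using hu hv by simp
    qed
  qed
  have lift: "(h x, h y) \<in> U\<^sup>*" if "(x, y) \<in> (und E W)\<^sup>*" for x y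
    using that
  proof (induction rule: rtrancl_induct)
    case base then show ?case by simp
  next
    case (step y z)
    have "(h y, h z) \<in> U\<^sup>*"
    proof (cases "(y, z) \<in> induced E W")
      case True
      then show ?thesis using edge[of y z] by (simp add: induced_def)
    next
      case False
      then have "(z, y) \<in> induced E W" using step(2) by (simp add: und_def)
      then show ?thesis using edge[of z y] by (simp add: induced_def)
    qed
    then show ?case using step(3) by (rule rtrancl_trans[rotated])
  qed
  have conn: "\<forall>x\<in>W - S. \<forall>y\<in>W - S. (x, y) \<in> (P \<union> P\<inverse>)\<^sup>*"
  proof (intro ballI)
    fix x y assume x: "x \<in> W - S" and y: "y \<in> W - S"
    have "(x, y) \<in> (und E W)\<^sup>*" using c x y by (simp add: und_connected_def)
    then have "(h x, h y) \<in> U\<^sup>*" by (rule lift)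
    then show "(x, y) \<in> (P \<union> P\<inverse>)\<^sup>*" using x y by (simp add: h_def U_def)
  qed
  have "card (W - S) \<le> card P + 1" using graph_count[OF finP conn] .
  then show ?thesis using cardP by (simp add: S_def)
qed

lemma lemB:
  "W \<subseteq> V \<Longrightarrow> und_connected E W \<Longrightarrow> \<exists>t. elim_tree E W t \<and> 4 * tdepth t \<le> card W + 8"
proof (induction "card W" arbitrary: W rule: less_induct)
  case less
  have finW: "finite W" using less.prems finV finite_subset by blast
  show ?case
  proof (cases "\<exists>s. sources E W = {s}")
    case True
    then obtain s where "sources E W = {s}" by blast
    from tree_one[OF less.prems(2) this] obtain t where "elim_tree E W t" "tdepth t \<le> 1" by blast
    then show ?thesis by (intro exI[of _ t]) simp
  next
    case many: False
    show ?thesis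
    proof (cases "\<exists>s\<in>sources E W. 4 \<le> card (reach E W s)")
      case True
      then obtain s where s: "s \<in> sources E W" "4 \<le> card (reach E W s)" by blast
      have sW: "s \<in> W" using s by (simp add: sources_def)
      define D where "D = (card W + 4) div 4"
      have "\<forall>C\<in>components E (W - reach E W s). \<exists>t. elim_tree E C t \<and> tdepth t \<le> D"
      proof
        fix C assume C: "C \<in> components E (W - reach E W s)"
        note cc = comp_card[OF less.prems(1) sW C]
        from less.hyps[OF cc(5) cc(3) cc(4)] obtain t where
          t: "elim_tree E C t" "4 * tdepth t \<le> card C + 8" by blast
        have "tdepth t \<le> D" using t(2) cc(1) s(2) unfolding D_def by linarith
        then show "\<exists>t. elim_tree E C t \<and> tdepth t \<le> D" using t(1) by blast
      qed
      from tree_step[OF less.prems(2) s(1) _ finW this] many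
      obtain t where "elim_tree E W t" "tdepth t \<le> Suc D" by blast
      then show ?thesis unfolding D_def by (intro exI[of _ t]) linarith
    next
      case False
      then have r3: "\<forall>s\<in>sources E W. card (reach E W s) \<le> 3" by auto
      have m: "\<forall>s. sources E W \<noteq> {s}" using many by blast
      have cnt: "card (W - sources E W) \<le> card (sources E W) + 1"
        using counting[OF less.prems m r3] .
      obtain t where t: "elim_tree E W t" "2 * tdepth t \<le> card (W - sources E W) + 3"
        using lemA[OF less.prems] by blast
      have SW: "sources E W \<subseteq> W" by (auto simp: sources_def)
      have "card W = card (W - sources E W) + card (sources E W)"
        using finW SW by (metis card_Diff_subset card_mono diff_add_cancel finite_subset add.commute le_add_diff_inverse)
      then show ?thesis using t cnt by (intro exI[of _ t]) linarith
    qed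
  qed
qed


end

theorem mainTheorem9:
  fixes V :: "'a set" and E :: "'a rel" and k :: nat
  assumes "is_dag V E" and "card V = k"
  shows "dtd V E \<le> k div 4 + 2"
proof -
  have finV: "finite V" using assms(1) by (simp add: is_dag_def)
  have "\<forall>C\<in>components E V. \<exists>t. elim_tree E C t \<and> tdepth t \<le> k div 4 + 2"
  proof
    fix C assume C: "C \<in> components E V"
    have CV: "C \<subseteq> V" using components_props(1)[OF C] .
    obtain t where t: "elim_tree E C t" "4 * tdepth t \<le> card C + 8"
      using lemB[OF assms(1) CV components_props(2)[OF C]] by blast
    have "card C \<le> k" using card_mono[OF finV CV] assms(2) by simp
    then have "tdepth t \<le> k div 4 + 2" using t(2) by linarith
    then show "\<exists>t. elim_tree E C t \<and> tdepth t \<le> k div 4 + 2" using t(1) by blast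
  qed
  from forest_exists[OF finV this] obtain F where F: "elim_forest E V F" "fdepth F \<le> k div 4 + 2"
    by blast
  have "dtd V E \<le> fdepth F" unfolding dtd_def using F(1) by (intro Least_le) blast
  then show ?thesis using F(2) by linarith
qed

end
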